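(* Let $K$ be a context, $N$ an embedded net, $\sigma_0$ a marking of state conditions, and suppose $K[N]$ is a non-interfering substitution from $\sigma_0$. Then every complete sequence $\pi$ of $K[N]$ from $(I(K[N]),\sigma_0)$ (i.e. a sequence of events from $(I(K[N]),\sigma_0)$ to $(T(K[N]),\sigma')$ for some $\sigma'$) is of the form $\Pi_0\cdot(\Pi_1\cdot\Pi_0)^*$, where: (a) $\Pi_0$ ranges over sequences consisting of $K$-events all of whose markings (including the first and last) are $K$-markings; (b) $\Pi_1$ ranges over nonempty sequences of events (of either kind) all of whose markings are $N$-markings, in which no $K$-event has a pre- or postcondition in $P_i\cup P_t$, such that if $(C_N\cup C_K,\sigma)$ and $(C_N'\cup C_K',\sigma')$ are the initial and final markings of the sequence then $C_N=P_i$ and $C_N'=P_t$, and whose first and last events are both $N$-events.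
   Context: Petri nets: an event $e$ has preconditions ${}^\bullet e$ and postconditions $e^\bullet$; events are identified with their pair $({}^\bullet e,e^\bullet)$. $e$ has concession in marking $M$ if ${}^\bullet e\subseteq M$ and $(M\setminus{}^\bullet e)\cap e^\bullet=\emptyset$; then $M\xrightarrow{e}M'=(M\setminus{}^\bullet e)\cup e^\bullet$. $e_1 I e_2$ (independence) iff $({}^\bullet e_1\cup e_1^\bullet)\cap({}^\bullet e_2\cup e_2^\bullet)=\emptyset$. A sequence $e_1\dots e_n$ from $M$ goes through markings $M=M_0\xrightarrow{e_1}M_1\cdots\xrightarrow{e_n}M_n$; these $M_j$ are its markings. A sequence $\pi$ from $M$ is of form $\Pi\cdot\Pi'$ if $\pi=\pi_1\cdot\pi_2$ (concatenation) with $\pi_1$ of form $\Pi$ from $M$ and $\pi_2$ of form $\Pi'$ from the marking reached by $\pi_1$; it is of form $\Pi^*$ if it is a finite concatenation (possibly empty) of sequences of form $\Pi$ in this sense. Conditions: a set $\mathcal C$ of control conditions with distinguished elements $\iota,\tau$ closed under injective constructors $1{:}c$, $2{:}c$, $(c,c')$ with disjoint images; a disjoint set $\mathcal S$ of state conditions. Markings are written $(C,\sigma)$, $C\subseteq\mathcal C,\sigma\subseteq\mathcal S$; ${}^Ce={}^\bullet e\cap\mathcal C$, $e^C=e^\bullet\cap\mathcal C$. An embedded net $N$: events $\mathrm{Ev}(N)$ over conditions $\mathcal C\cup\mathcal S$ and sets $I(N),T(N)\subseteq\mathcal C$. Control firing $C\xrightarrow{e}_{\mathcal C}C'$: ${}^Ce\subseteq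 C$, $(C\setminus{}^Ce)\cap e^C=\emptyset$, $C'=(C\setminus{}^Ce)\cup e^C$; control-reachability via events of the net. Standing assumption: all embedded nets satisfy $I(N),T(N)\neq\emptyset$; ${}^Ce,e^C\neq\emptyset$ for all events; $I(N)\cap T(N)=\emptyset$; ${}^Ce\cap T(N)=\emptyset$; and for all $C$ control-reachable from $I(N)$: $C\subseteq I(N)$ or $I(N)\subseteq C$ implies $C=I(N)$, and $C\subseteq T(N)$ or $T(N)\subseteq C$ implies $C=T(N)$. Tagging $1{:}C$, $1{:}e$ (tag control conditions only), similarly $2$. Gluing for $P\subseteq\mathcal C\times\mathcal C$: $P\triangleleft C=\{(c_1,c_2)\mid c_1\in C,(c_1,c_2)\in P\}\cup\{c_1\in C\mid\nexists c_2.(c_1,c_2)\in P\}$, $P\triangleright C=\{(c_1,c_2)\mid c_2\in C,(c_1,c_2)\in P\}\cup\{c_2\in C\mid\nexists c_1.(c_1,c_2)\in P\}$, applied to events on control conditions only. A context $K$ is an embedded net with a distinguished event $[-]$ whose pre/postconditions are control conditions, forming disjoint nonempty sets. $P_i=1{:}{}^\bullet[-]\times 2{:}I(N)$, $P_t=1{:}[-]^\bullet\times 2{:}T(N)$, $P=P_i\cup P_t$. $K[N]$ has events $P\triangleleft1{:}(\mathrm{Ev}(K)\setminus\{[-]\})\cup P\triangleright 2{:}\mathrm{Ev}(N)$, $I(K[N])=P\triangleleft1{:}I(K)$, $T(K[N])=P\triangleleft 1{:}T(K)$. $N$-events: $P\triangleright 2{:}e$, $e\in\mathrm{Ev}(N)$;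 $K$-events: $P\triangleleft1{:}e$, $e\in\mathrm{Ev}(K)\setminus\{[-]\}$. Standing assumption: no event of $K[N]$ is both a $K$-event and an $N$-event. A $K$-condition is $1{:}c_1$ with $c_1\in\mathcal C\setminus({}^\bullet[-]\cup[-]^\bullet)$; an $N$-internal condition is $2{:}c_2$ with $c_2\notin I(N)\cup T(N)$; an $N$-condition is an element of $P_i\cup P_t$ or an $N$-internal condition. A marking is written $(C_N\cup C_K,\sigma)$ with $C_N$ its $N$-conditions and $C_K$ its $K$-conditions. It is an $N$-marking if for all $a,a'\in{}^\bullet[-]$, $x,x'\in[-]^\bullet$, $i\in I(N)$, $t\in T(N)$: $(1{:}a,2{:}i)\in C_N\Rightarrow(1{:}a',2{:}i)\in C_N$ and $(1{:}x,2{:}t)\in C_N\Rightarrow(1{:}x',2{:}t)\in C_N$. It is a $K$-marking if it contains no $N$-internal condition and for all $a\in{}^\bullet[-]$, $x\in[-]^\bullet$, $i,i'\in I(N)$, $t,t'\in T(N)$: $(1{:}a,2{:}i)\in C_N\Rightarrow(1{:}a,2{:}i')\in C_N$ and $(1{:}x,2{:}t)\in C_N\Rightarrow(1{:}x,2{:}t')\in C_N$. A condition is internal to $N$ if it is $2{:}c_2$ with $c_2$ a pre- or postcondition of an event of $N$ not in $I(N)\cup T(N)$; $N$ is active in $M$ if $P_i\subseteq M$ or $M$ contains a condition internal to $N$. $K[N]$ is a non-interfering substitution from $\sigma_0$ if for every $M$ reachable from $(I(K[N]),\sigma_0)$: (1) $P_i\subseteq M$ implies $P_t\cap M=\emptyset$;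 (2) if $N$ is active in $M$, no $K$-event enabled in $M$ has a pre- or postcondition in $P_i\cup P_t$; (3) if $M\xrightarrow{e_1}M_1\xrightarrow{e_2}M'$, one of $e_1,e_2$ an $N$-event and the other a $K$-event, and $N$ active in $M$ and $M_1$, then $e_1Ie_2$. *)

theory Defs
  imports Main
begin

text \<open>Control conditions: a free algebra over atoms (which include the distinguished
  iota and tau) closed under the injective constructors 1:c, 2:c and (c,c') with
  disjoint images.\<close>
datatype 'a ctrl = Iota | Tau | Atom 'a | Tag1 "'a ctrl" | Tag2 "'a ctrl"
  | Glue "'a ctrl" "'a ctrl"

text \<open>Conditions are control conditions (Inl) or state conditions (Inr).\<close>
type_synonym ('a,'s) cond = "'a ctrl + 's"
type_synonym ('a,'s) marking = "('a,'s) cond set"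
text \<open>An event is identified with the pair (preconditions, postconditions).\<close>
type_synonym ('a,'s) event = "('a,'s) cond set \<times> ('a,'s) cond set"

definition ctl :: "('a,'s) cond set \<Rightarrow> 'a ctrl set" where
  "ctl X = {c. Inl c \<in> X}"
definition st :: "('a,'s) cond set \<Rightarrow> 's set" where
  "st X = {s. Inr s \<in> X}"
definition mk :: "'a ctrl set \<Rightarrow> 's set \<Rightarrow> ('a,'s) marking" where
  "mk C \<sigma> = Inl ` C \<union> Inr ` \<sigma>"

definition pre :: "('a,'s) event \<Rightarrow> ('a,'s) cond set" where "pre e = fst e"
definition post :: "('a,'s) event \<Rightarrow> ('a,'s) cond set" where "post e = snd e"

definition concession :: "('a,'s) event \<Rightarrow> ('a,'s) marking \<Rightarrow> bool" where
  "concession e M \<longleftrightarrow> pre e \<subseteq> M \<and> (M - pre e) \<inter> post e = {}"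

definition fire :: "('a,'s) event \<Rightarrow> ('a,'s) marking \<Rightarrow> ('a,'s) marking" where
  "fire e M = (M - pre e) \<union> post e"

definition indep :: "('a,'s) event \<Rightarrow> ('a,'s) event \<Rightarrow> bool" where
  "indep e1 e2 \<longleftrightarrow> (pre e1 \<union> post e1) \<inter> (pre e2 \<union> post e2) = {}"

fun valid_seq :: "('a,'s) event set \<Rightarrow> ('a,'s) marking \<Rightarrow> ('a,'s) event list \<Rightarrow> bool" where
  "valid_seq E M [] = True"
| "valid_seq E M (e # es) = (e \<in> E \<and> concession e M \<and> valid_seq E (fire e M) es)"

fun markings :: "('a,'s) marking \<Rightarrow> ('a,'s) event list \<Rightarrow> ('a,'s) marking list" where
  "markings M [] = [M]"
| "markings M (e # es) = M # markings (fire e M) es"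

definition end_marking :: "('a,'s) marking \<Rightarrow> ('a,'s) event list \<Rightarrow> ('a,'s) marking" where
  "end_marking M es = last (markings M es)"

definition reachable :: "('a,'s) event set \<Rightarrow> ('a,'s) marking \<Rightarrow> ('a,'s) marking \<Rightarrow> bool" where
  "reachable E M0 M \<longleftrightarrow> (\<exists>es. valid_seq E M0 es \<and> end_marking M0 es = M)"

record ('a,'s) enet =
  Ev :: "('a,'s) event set"
  Ini :: "'a ctrl set"
  Ter :: "'a ctrl set"

definition ctrl_fire :: "'a ctrl set \<Rightarrow> ('a,'s) event \<Rightarrow> 'a ctrl set \<Rightarrow> bool" where
  "ctrl_fire C e C' \<longleftrightarrow> ctl (pre e) \<subseteq> C \<and> (C - ctl (pre e)) \<inter> ctl (post e) = {}
     \<and> C' = (C - ctl (pre e)) \<union> ctl (post e)"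

inductive_set ctrl_reach :: "('a,'s) enet \<Rightarrow> 'a ctrl set set" for N where
  init: "Ini N \<in> ctrl_reach N"
| step: "C \<in> ctrl_reach N \<Longrightarrow> e \<in> Ev N \<Longrightarrow> ctrl_fire C e C' \<Longrightarrow> C' \<in> ctrl_reach N"

definition wf_enet :: "('a,'s) enet \<Rightarrow> bool" where
  "wf_enet N \<longleftrightarrow> Ini N \<noteq> {} \<and> Ter N \<noteq> {}
     \<and> (\<forall>e\<in>Ev N. ctl (pre e) \<noteq> {} \<and> ctl (post e) \<noteq> {})
     \<and> Ini N \<inter> Ter N = {}
     \<and> (\<forall>e\<in>Ev N. ctl (pre e) \<inter> Ter N = {})
     \<and> (\<forall>C\<in>ctrl_reach N.
          ((C \<subseteq> Ini N \<or> Ini N \<subseteq> C) \<longrightarrow> C = Ini N)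
        \<and> ((C \<subseteq> Ter N \<or> Ter N \<subseteq> C) \<longrightarrow> C = Ter N))"

definition map_ctl :: "('a ctrl set \<Rightarrow> 'a ctrl set) \<Rightarrow> ('a,'s) event \<Rightarrow> ('a,'s) event" where
  "map_ctl f e = (mk (f (ctl (pre e))) (st (pre e)), mk (f (ctl (post e))) (st (post e)))"

definition glueL :: "('a ctrl \<times> 'a ctrl) set \<Rightarrow> 'a ctrl set \<Rightarrow> 'a ctrl set" where
  "glueL P C = {Glue c1 c2 | c1 c2. c1 \<in> C \<and> (c1, c2) \<in> P}
     \<union> {c1 \<in> C. \<nexists>c2. (c1, c2) \<in> P}"

definition glueR :: "('a ctrl \<times> 'a ctrl) set \<Rightarrow> 'a ctrl set \<Rightarrow> 'a ctrl set" where
  "glueR P C = {Glue c1 c2 | c1 c2. c2 \<in> C \<and> (c1, c2) \<in> P}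
     \<union> {c2 \<in> C. \<nexists>c1. (c1, c2) \<in> P}"

definition is_context :: "('a,'s) enet \<Rightarrow> ('a,'s) event \<Rightarrow> bool" where
  "is_context K h \<longleftrightarrow> wf_enet K \<and> h \<in> Ev K
     \<and> st (pre h) = {} \<and> st (post h) = {}
     \<and> ctl (pre h) \<noteq> {} \<and> ctl (post h) \<noteq> {}
     \<and> ctl (pre h) \<inter> ctl (post h) = {}"

definition Pi_rel :: "('a,'s) enet \<Rightarrow> ('a,'s) event \<Rightarrow> ('a,'s) enet \<Rightarrow> ('a ctrl \<times> 'a ctrl) set" where
  "Pi_rel K h N = (Tag1 ` ctl (pre h)) \<times> (Tag2 ` Ini N)"
definition Pt_rel :: "('a,'s) enet \<Rightarrow> ('a,'s) event \<Rightarrow> ('a,'s) enet \<Rightarrow> ('a ctrl \<times> 'a ctrl) set" where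
  "Pt_rel K h N = (Tag1 ` ctl (post h)) \<times> (Tag2 ` Ter N)"
definition P_rel :: "('a,'s) enet \<Rightarrow> ('a,'s) event \<Rightarrow> ('a,'s) enet \<Rightarrow> ('a ctrl \<times> 'a ctrl) set" where
  "P_rel K h N = Pi_rel K h N \<union> Pt_rel K h N"

definition PiC :: "('a,'s) enet \<Rightarrow> ('a,'s) event \<Rightarrow> ('a,'s) enet \<Rightarrow> 'a ctrl set" where
  "PiC K h N = (\<lambda>(c1, c2). Glue c1 c2) ` Pi_rel K h N"
definition PtC :: "('a,'s) enet \<Rightarrow> ('a,'s) event \<Rightarrow> ('a,'s) enet \<Rightarrow> 'a ctrl set" where
  "PtC K h N = (\<lambda>(c1, c2). Glue c1 c2) ` Pt_rel K h N"

definition Kev_of :: "('a,'s) enet \<Rightarrow> ('a,'s) event \<Rightarrow> ('a,'s) enet \<Rightarrow> ('a,'s) event \<Rightarrow> ('a,'s) event" where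
  "Kev_of K h N e = map_ctl (\<lambda>C. glueL (P_rel K h N) (Tag1 ` C)) e"
definition Nev_of :: "('a,'s) enet \<Rightarrow> ('a,'s) event \<Rightarrow> ('a,'s) enet \<Rightarrow> ('a,'s) event \<Rightarrow> ('a,'s) event" where
  "Nev_of K h N e = map_ctl (\<lambda>C. glueR (P_rel K h N) (Tag2 ` C)) e"

definition subst :: "('a,'s) enet \<Rightarrow> ('a,'s) event \<Rightarrow> ('a,'s) enet \<Rightarrow> ('a,'s) enet" where
  "subst K h N = \<lparr> Ev = Kev_of K h N ` (Ev K - {h}) \<union> Nev_of K h N ` Ev N,
                   Ini = glueL (P_rel K h N) (Tag1 ` Ini K),
                   Ter = glueL (P_rel K h N) (Tag1 ` Ter K) \<rparr>"

definition is_Kevent :: "('a,'s) enet \<Rightarrow> ('a,'s) event \<Rightarrow> ('a,'s) enet \<Rightarrow> ('a,'s) event \<Rightarrow> bool" where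
  "is_Kevent K h N e \<longleftrightarrow> e \<in> Kev_of K h N ` (Ev K - {h})"
definition is_Nevent :: "('a,'s) enet \<Rightarrow> ('a,'s) event \<Rightarrow> ('a,'s) enet \<Rightarrow> ('a,'s) event \<Rightarrow> bool" where
  "is_Nevent K h N e \<longleftrightarrow> e \<in> Nev_of K h N ` Ev N"

definition events_disjoint :: "('a,'s) enet \<Rightarrow> ('a,'s) event \<Rightarrow> ('a,'s) enet \<Rightarrow> bool" where
  "events_disjoint K h N \<longleftrightarrow>
     (\<forall>e. \<not> (is_Kevent K h N e \<and> is_Nevent K h N e))"

definition is_Kcond :: "('a,'s) enet \<Rightarrow> ('a,'s) event \<Rightarrow> ('a,'s) enet \<Rightarrow> 'a ctrl \<Rightarrow> bool" where
  "is_Kcond K h N c \<longleftrightarrow> (\<exists>c1. c = Tag1 c1 \<and> c1 \<notin> ctl (pre h) \<union> ctl (post h))"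
definition is_Ninternal_cond :: "('a,'s) enet \<Rightarrow> ('a,'s) event \<Rightarrow> ('a,'s) enet \<Rightarrow> 'a ctrl \<Rightarrow> bool" where
  "is_Ninternal_cond K h N c \<longleftrightarrow> (\<exists>c2. c = Tag2 c2 \<and> c2 \<notin> Ini N \<union> Ter N)"
definition is_Ncond :: "('a,'s) enet \<Rightarrow> ('a,'s) event \<Rightarrow> ('a,'s) enet \<Rightarrow> 'a ctrl \<Rightarrow> bool" where
  "is_Ncond K h N c \<longleftrightarrow> c \<in> PiC K h N \<union> PtC K h N \<or> is_Ninternal_cond K h N c"

definition CN :: "('a,'s) enet \<Rightarrow> ('a,'s) event \<Rightarrow> ('a,'s) enet \<Rightarrow> ('a,'s) marking \<Rightarrow> 'a ctrl set" where
  "CN K h N M = {c \<in> ctl M. is_Ncond K h N c}"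
definition CK :: "('a,'s) enet \<Rightarrow> ('a,'s) event \<Rightarrow> ('a,'s) enet \<Rightarrow> ('a,'s) marking \<Rightarrow> 'a ctrl set" where
  "CK K h N M = {c \<in> ctl M. is_Kcond K h N c}"

definition is_Nmarking :: "('a,'s) enet \<Rightarrow> ('a,'s) event \<Rightarrow> ('a,'s) enet \<Rightarrow> ('a,'s) marking \<Rightarrow> bool" where
  "is_Nmarking K h N M \<longleftrightarrow>
     (\<forall>a\<in>ctl (pre h). \<forall>a'\<in>ctl (pre h). \<forall>i\<in>Ini N.
        Glue (Tag1 a) (Tag2 i) \<in> CN K h N M \<longrightarrow> Glue (Tag1 a') (Tag2 i) \<in> CN K h N M)
   \<and> (\<forall>x\<in>ctl (post h). \<forall>x'\<in>ctl (post h). \<forall>t\<in>Ter N.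
        Glue (Tag1 x) (Tag2 t) \<in> CN K h N M \<longrightarrow> Glue (Tag1 x') (Tag2 t) \<in> CN K h N M)"

definition is_Kmarking :: "('a,'s) enet \<Rightarrow> ('a,'s) event \<Rightarrow> ('a,'s) enet \<Rightarrow> ('a,'s) marking \<Rightarrow> bool" where
  "is_Kmarking K h N M \<longleftrightarrow>
     (\<forall>c\<in>ctl M. \<not> is_Ninternal_cond K h N c)
   \<and> (\<forall>a\<in>ctl (pre h). \<forall>i\<in>Ini N. \<forall>i'\<in>Ini N.
        Glue (Tag1 a) (Tag2 i) \<in> CN K h N M \<longrightarrow> Glue (Tag1 a) (Tag2 i') \<in> CN K h N M)
   \<and> (\<forall>x\<in>ctl (post h). \<forall>t\<in>Ter N. \<forall>t'\<in>Ter N.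
        Glue (Tag1 x) (Tag2 t) \<in> CN K h N M \<longrightarrow> Glue (Tag1 x) (Tag2 t') \<in> CN K h N M)"

definition internal_to_N :: "('a,'s) enet \<Rightarrow> 'a ctrl \<Rightarrow> bool" where
  "internal_to_N N c \<longleftrightarrow> (\<exists>c2 e. c = Tag2 c2 \<and> e \<in> Ev N
       \<and> c2 \<in> ctl (pre e) \<union> ctl (post e) \<and> c2 \<notin> Ini N \<union> Ter N)"

definition N_active :: "('a,'s) enet \<Rightarrow> ('a,'s) event \<Rightarrow> ('a,'s) enet \<Rightarrow> ('a,'s) marking \<Rightarrow> bool" where
  "N_active K h N M \<longleftrightarrow> PiC K h N \<subseteq> ctl M \<or> (\<exists>c\<in>ctl M. internal_to_N N c)"

definition touches :: "('a,'s) event \<Rightarrow> 'a ctrl set \<Rightarrow> bool" where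
  "touches e X \<longleftrightarrow> (ctl (pre e) \<union> ctl (post e)) \<inter> X \<noteq> {}"

definition non_interfering :: "('a,'s) enet \<Rightarrow> ('a,'s) event \<Rightarrow> ('a,'s) enet \<Rightarrow> 's set \<Rightarrow> bool" where
  "non_interfering K h N \<sigma>0 \<longleftrightarrow>
    (\<forall>M. reachable (Ev (subst K h N)) (mk (Ini (subst K h N)) \<sigma>0) M \<longrightarrow>
       (PiC K h N \<subseteq> ctl M \<longrightarrow> PtC K h N \<inter> ctl M = {})
     \<and> (N_active K h N M \<longrightarrow>
          (\<forall>e. is_Kevent K h N e \<and> concession e M \<longrightarrow>
               \<not> touches e (PiC K h N \<union> PtC K h N)))
     \<and> (\<forall>e1 e2. concession e1 M \<and> concession e2 (fire e1 M)
          \<and> ((is_Nevent K h N e1 \<and> is_Kevent K h N e2) \<or> (is_Kevent K h N e1 \<and> is_Nevent K h N e2))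
          \<and> N_active K h N M \<and> N_active K h N (fire e1 M)
          \<longrightarrow> indep e1 e2))"

definition form0 :: "('a,'s) enet \<Rightarrow> ('a,'s) event \<Rightarrow> ('a,'s) enet \<Rightarrow> ('a,'s) marking \<Rightarrow> ('a,'s) event list \<Rightarrow> bool" where
  "form0 K h N M es \<longleftrightarrow> valid_seq (Ev (subst K h N)) M es
     \<and> (\<forall>e\<in>set es. is_Kevent K h N e)
     \<and> (\<forall>M'\<in>set (markings M es). is_Kmarking K h N M')"

definition form1 :: "('a,'s) enet \<Rightarrow> ('a,'s) event \<Rightarrow> ('a,'s) enet \<Rightarrow> ('a,'s) marking \<Rightarrow> ('a,'s) event list \<Rightarrow> bool" where
  "form1 K h N M es \<longleftrightarrow> valid_seq (Ev (subst K h N)) M es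
     \<and> es \<noteq> []
     \<and> (\<forall>M'\<in>set (markings M es). is_Nmarking K h N M')
     \<and> (\<forall>e\<in>set es. is_Kevent K h N e \<longrightarrow> \<not> touches e (PiC K h N \<union> PtC K h N))
     \<and> CN K h N M = PiC K h N
     \<and> CN K h N (end_marking M es) = PtC K h N
     \<and> is_Nevent K h N (hd es) \<and> is_Nevent K h N (last es)"

text \<open>Form (Pi_1 . Pi_0)^*: a list of consecutive pieces (alpha_j, beta_j).\<close>
fun form_star :: "('a,'s) enet \<Rightarrow> ('a,'s) event \<Rightarrow> ('a,'s) enet \<Rightarrow> ('a,'s) marking
    \<Rightarrow> (('a,'s) event list \<times> ('a,'s) event list) list \<Rightarrow> bool" where
  "form_star K h N M [] = True"
| "form_star K h N M ((a, b) # rest) =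
     (form1 K h N M a \<and> form0 K h N (end_marking M a) b
      \<and> form_star K h N (end_marking M (a @ b)) rest)"

end

theory Submission
  imports Defs
begin


lemma ctl_mk[simp]: "ctl (mk C \<sigma>) = C" by (auto simp: ctl_def mk_def)
lemma st_mk[simp]: "st (mk C \<sigma>) = \<sigma>" by (auto simp: st_def mk_def)
lemma ctl_Un[simp]: "ctl (A \<union> B) = ctl A \<union> ctl B" by (auto simp: ctl_def)
lemma ctl_Diff[simp]: "ctl (A - B) = ctl A - ctl B" by (auto simp: ctl_def)
lemma ctl_Int[simp]: "ctl (A \<inter> B) = ctl A \<inter> ctl B" by (auto simp: ctl_def)
lemma ctl_empty[simp]: "ctl {} = {}" by (auto simp: ctl_def)
lemma ctl_mono: "A \<subseteq> B \<Longrightarrow> ctl A \<subseteq> ctl B" by (auto simp: ctl_def)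
lemma pre_map_ctl[simp]: "pre (map_ctl f e) = mk (f (ctl (pre e))) (st (pre e))"
  by (simp add: map_ctl_def pre_def)
lemma post_map_ctl[simp]: "post (map_ctl f e) = mk (f (ctl (post e))) (st (post e))"
  by (simp add: map_ctl_def post_def)
lemma ctl_fire: "ctl (fire e M) = (ctl M - ctl (pre e)) \<union> ctl (post e)"
  by (simp add: fire_def)
lemma concession_ctl:
  assumes "concession e M"
  shows "ctl (pre e) \<subseteq> ctl M" "(ctl M - ctl (pre e)) \<inter> ctl (post e) = {}"
proof -
  show "ctl (pre e) \<subseteq> ctl M" using assms ctl_mono by (auto simp: concession_def)
  have "ctl ((M - pre e) \<inter> post e) = {}" using assms by (simp add: concession_def)
  then show "(ctl M - ctl (pre e)) \<inter> ctl (post e) = {}" by simp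
qed

lemma markings_ne[simp]: "markings M es \<noteq> []" by (cases es) auto
lemma end_Nil[simp]: "end_marking M [] = M" by (simp add: end_marking_def)
lemma end_Cons[simp]: "end_marking M (e#es) = end_marking (fire e M) es"
  by (simp add: end_marking_def)
lemma end_append: "end_marking M (a@b) = end_marking (end_marking M a) b"
  by (induct a arbitrary: M) auto
lemma valid_append: "valid_seq E M (a@b) \<longleftrightarrow> valid_seq E M a \<and> valid_seq E (end_marking M a) b"
  by (induct a arbitrary: M) auto
lemma reach_step: "reachable E M0 M \<Longrightarrow> e \<in> E \<Longrightarrow> concession e M \<Longrightarrow> reachable E M0 (fire e M)"
  unfolding reachable_def
  apply clarify
  subgoal for es apply (rule exI[of _ "es@[e]"]) by (simp add: valid_append end_append)
  done
lemma reach_refl: "reachable E M0 M0"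
  unfolding reachable_def by (rule exI[of _ "[]"]) simp

lemma P_rel_mem: "(c1, c2) \<in> P_rel K h N \<longleftrightarrow>
   (\<exists>a i. c1 = Tag1 a \<and> c2 = Tag2 i \<and> (a \<in> ctl (pre h) \<and> i \<in> Ini N \<or> a \<in> ctl (post h) \<and> i \<in> Ter N))"
  unfolding P_rel_def Pi_rel_def Pt_rel_def by auto

lemma glueR_Glue: "Glue (Tag1 a) (Tag2 i) \<in> glueR (P_rel K h N) (Tag2 ` C) \<longleftrightarrow>
   i \<in> C \<and> (a \<in> ctl (pre h) \<and> i \<in> Ini N \<or> a \<in> ctl (post h) \<and> i \<in> Ter N)"
  unfolding glueR_def P_rel_mem by auto

lemma glueR_Tag2:
  assumes "ctl (pre h) \<noteq> {}" "ctl (post h) \<noteq> {}"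
  shows "Tag2 c \<in> glueR (P_rel K h N) (Tag2 ` C) \<longleftrightarrow> c \<in> C \<and> c \<notin> Ini N \<and> c \<notin> Ter N"
  using assms unfolding glueR_def P_rel_mem by auto

lemma glueR_cases: "x \<in> glueR (P_rel K h N) (Tag2 ` C) \<Longrightarrow>
   (\<exists>a i. x = Glue (Tag1 a) (Tag2 i)) \<or> (\<exists>c. x = Tag2 c)"
  unfolding glueR_def P_rel_mem by auto

lemma glueL_Glue: "Glue (Tag1 a) (Tag2 i) \<in> glueL (P_rel K h N) (Tag1 ` C) \<longleftrightarrow>
   a \<in> C \<and> (a \<in> ctl (pre h) \<and> i \<in> Ini N \<or> a \<in> ctl (post h) \<and> i \<in> Ter N)"
  unfolding glueL_def P_rel_mem by auto

lemma glueL_Tag1: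
  assumes "Ini N \<noteq> {}" "Ter N \<noteq> {}"
  shows "Tag1 c \<in> glueL (P_rel K h N) (Tag1 ` C) \<longleftrightarrow> c \<in> C \<and> c \<notin> ctl (pre h) \<and> c \<notin> ctl (post h)"
  using assms unfolding glueL_def P_rel_mem by auto

lemma glueL_cases: "x \<in> glueL (P_rel K h N) (Tag1 ` C) \<Longrightarrow>
   (\<exists>a i. x = Glue (Tag1 a) (Tag2 i)) \<or> (\<exists>c. x = Tag1 c)"
  unfolding glueL_def P_rel_mem by auto

lemma Ncond_Glue: "is_Ncond K h N (Glue (Tag1 a) (Tag2 i)) \<longleftrightarrow>
   (a \<in> ctl (pre h) \<and> i \<in> Ini N \<or> a \<in> ctl (post h) \<and> i \<in> Ter N)"
  unfolding is_Ncond_def is_Ninternal_cond_def PiC_def PtC_def Pi_rel_def Pt_rel_def by auto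
lemma Ncond_Tag2: "is_Ncond K h N (Tag2 c) \<longleftrightarrow> c \<notin> Ini N \<and> c \<notin> Ter N"
  unfolding is_Ncond_def is_Ninternal_cond_def PiC_def PtC_def Pi_rel_def Pt_rel_def by auto
lemma Ncond_Tag1: "\<not> is_Ncond K h N (Tag1 c)"
  unfolding is_Ncond_def is_Ninternal_cond_def PiC_def PtC_def Pi_rel_def Pt_rel_def by auto
lemma Ncond_cases: "is_Ncond K h N x \<Longrightarrow> (\<exists>a i. x = Glue (Tag1 a) (Tag2 i)) \<or> (\<exists>c. x = Tag2 c)"
  unfolding is_Ncond_def is_Ninternal_cond_def PiC_def PtC_def Pi_rel_def Pt_rel_def by auto

lemma PiC_mem: "x \<in> PiC K h N \<longleftrightarrow> (\<exists>a i. x = Glue (Tag1 a) (Tag2 i) \<and> a \<in> ctl (pre h) \<and> i \<in> Ini N)"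
  unfolding PiC_def Pi_rel_def by auto
lemma PtC_mem: "x \<in> PtC K h N \<longleftrightarrow> (\<exists>a i. x = Glue (Tag1 a) (Tag2 i) \<and> a \<in> ctl (post h) \<and> i \<in> Ter N)"
  unfolding PtC_def Pt_rel_def by auto



lemma CN_mem: "x \<in> CN K h N M \<longleftrightarrow> x \<in> ctl M \<and> is_Ncond K h N x"
  by (simp add: CN_def)

lemma CN_fire: "CN K h N (fire e M) = (CN K h N M - ctl (pre e)) \<union> {c \<in> ctl (post e). is_Ncond K h N c}"
  by (auto simp: CN_def ctl_fire)

locale L =
  fixes K :: "('a,'s) enet" and h :: "('a,'s) event" and N :: "('a,'s) enet" and \<sigma>0 :: "'s set"
  assumes ctx: "is_context K h" and wfN: "wf_enet N" and disj: "events_disjoint K h N"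
    and ni: "non_interfering K h N \<sigma>0"
begin

abbreviation "preh \<equiv> ctl (pre h)"
abbreviation "posth \<equiv> ctl (post h)"
abbreviation "P \<equiv> P_rel K h N"
abbreviation "NE C \<equiv> glueR P (Tag2 ` C)"
abbreviation "KE D \<equiv> glueL P (Tag1 ` D)"
abbreviation "E \<equiv> Ev (subst K h N)"
abbreviation "M0 \<equiv> mk (Ini (subst K h N)) \<sigma>0"
abbreviation "Nc \<equiv> is_Ncond K h N"

lemma preh_ne: "preh \<noteq> {}" and posth_ne: "posth \<noteq> {}" and prepost: "preh \<inter> posth = {}"
  and hK: "h \<in> Ev K"
  using ctx by (auto simp: is_context_def)
lemma wfK: "wf_enet K" using ctx by (simp add: is_context_def)
lemma preh_TerK: "preh \<inter> Ter K = {}" using wfK hK by (auto simp: wf_enet_def)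
lemma Ini_ne: "Ini N \<noteq> {}" and Ter_ne: "Ter N \<noteq> {}" and IniTer: "Ini N \<inter> Ter N = {}"
  using wfN by (auto simp: wf_enet_def)
lemma Nev_pre_ne: "e \<in> Ev N \<Longrightarrow> ctl (pre e) \<noteq> {}" and Nev_post_ne: "e \<in> Ev N \<Longrightarrow> ctl (post e) \<noteq> {}"
  and Nev_pre_Ter: "e \<in> Ev N \<Longrightarrow> ctl (pre e) \<inter> Ter N = {}"
  using wfN by (auto simp: wf_enet_def)
lemma wf_reach: "C \<in> ctrl_reach N \<Longrightarrow> (C \<subseteq> Ini N \<or> Ini N \<subseteq> C \<longrightarrow> C = Ini N) \<and> (C \<subseteq> Ter N \<or> Ter N \<subseteq> C \<longrightarrow> C = Ter N)"
  using wfN unfolding wf_enet_def by blast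

lemma reach_ne: "C \<in> ctrl_reach N \<Longrightarrow> C \<noteq> {}"
  by (induct rule: ctrl_reach.induct) (auto simp: Ini_ne ctrl_fire_def dest: Nev_post_ne)

lemma reach_sub: "C \<in> ctrl_reach N \<Longrightarrow> c \<in> C \<Longrightarrow> c \<in> Ini N \<or> (\<exists>e\<in>Ev N. c \<in> ctl (post e))"
  by (induct arbitrary: c rule: ctrl_reach.induct) (auto simp: ctrl_fire_def)

lemmas memsimps = glueR_Glue glueR_Tag2[OF preh_ne posth_ne] glueL_Glue glueL_Tag1[OF Ini_ne Ter_ne]
  Ncond_Glue Ncond_Tag2 Ncond_Tag1 CN_mem

lemma Nc_split:
  assumes "\<And>a i. Q (Glue (Tag1 a) (Tag2 i))" "\<And>c. Q (Tag2 c)" "\<And>x. \<not> Nc x \<Longrightarrow> Q x"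
  shows "Q x"
  using assms Ncond_cases by metis

lemma glueL_Tag2[simp]: "Tag2 c \<notin> glueL (P_rel K h N) (Tag1 ` C)"
  using glueL_cases[where x="Tag2 c" and K=K and h=h and N=N and C=C] by auto
lemma glueR_Tag1[simp]: "Tag1 c \<notin> glueR (P_rel K h N) (Tag2 ` C)"
  using glueR_cases[where x="Tag1 c" and K=K and h=h and N=N and C=C] by auto

lemma KE_Nc: "D \<subseteq> preh \<union> posth \<Longrightarrow> x \<in> KE D \<Longrightarrow> Nc x"
  using glueL_cases[where x=x and K=K and h=h and N=N and C=D] by (auto simp: memsimps)

lemma NE_Nc: "x \<in> NE C \<Longrightarrow> Nc x"
  using glueR_cases[where x=x and K=K and h=h and N=N and C=C] by (auto simp: memsimps)

lemma KE_Nc_P: "x \<in> KE D \<Longrightarrow> Nc x \<Longrightarrow> x \<in> PiC K h N \<union> PtC K h N"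
  using glueL_cases[where x=x and K=K and h=h and N=N and C=D] by (auto simp: memsimps PiC_mem PtC_mem)

lemma Nev_ctl[simp]: "ctl (pre (Nev_of K h N e)) = NE (ctl (pre e))" "ctl (post (Nev_of K h N e)) = NE (ctl (post e))"
  by (simp_all add: Nev_of_def)
lemma Kev_ctl[simp]: "ctl (pre (Kev_of K h N e)) = KE (ctl (pre e))" "ctl (post (Kev_of K h N e)) = KE (ctl (post e))"
  by (simp_all add: Kev_of_def)

lemma wit: "\<exists>w. Nc w \<and> (\<forall>C. w \<in> NE C \<longleftrightarrow> c \<in> C)"
proof -
  obtain a where a: "a \<in> preh" using preh_ne by auto
  obtain x where x: "x \<in> posth" using posth_ne by auto
  show ?thesis
  proof (cases "c \<in> Ini N")
    case True
    then show ?thesis using a by (intro exI[of _ "Glue (Tag1 a) (Tag2 c)"]) (auto simp: memsimps)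
  next
    case F: False
    show ?thesis
    proof (cases "c \<in> Ter N")
      case True
      then show ?thesis using x by (intro exI[of _ "Glue (Tag1 x) (Tag2 c)"]) (auto simp: memsimps)
    next
      case False
      then show ?thesis using F by (intro exI[of _ "Tag2 c"]) (auto simp: memsimps)
    qed
  qed
qed

lemma K_fire_K:
  assumes "D \<subseteq> preh \<union> posth" "CN K h N M = KE D"
  shows "CN K h N (fire (Kev_of K h N e) M) = KE ((D - ctl (pre e)) \<union> (ctl (post e) \<inter> (preh \<union> posth)))"
proof (rule set_eqI)
  fix x
  have D': "(D - ctl (pre e)) \<union> (ctl (post e) \<inter> (preh \<union> posth)) \<subseteq> preh \<union> posth" using assms by auto
  show "x \<in> CN K h N (fire (Kev_of K h N e) M) \<longleftrightarrow> x \<in> KE ((D - ctl (pre e)) \<union> (ctl (post e) \<inter> (preh \<union> posth)))"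
  proof (induct x rule: Nc_split)
    case (1 a i)
    then show ?case unfolding CN_fire assms(2) using assms(1) by (auto simp: memsimps)
  next
    case (2 c)
    then show ?case unfolding CN_fire assms(2) by (auto simp: memsimps)
  next
    case (3 x)
    then show ?case unfolding CN_fire assms(2) using KE_Nc[OF D', of x] KE_Nc[OF assms(1), of x] by auto
  qed
qed

lemma Kmarking_of: "D \<subseteq> preh \<union> posth \<Longrightarrow> CN K h N M = KE D \<Longrightarrow> is_Kmarking K h N M"
  unfolding is_Kmarking_def
  apply (intro conjI ballI impI)
  subgoal for c
    apply (cases c) apply (auto simp: is_Ninternal_cond_def)
    by (metis CN_mem Ncond_Tag2 glueL_Tag2)
  by (auto simp: memsimps)

lemma Nmarking_of: "CN K h N M = NE C \<Longrightarrow> is_Nmarking K h N M"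
  unfolding is_Nmarking_def by (auto simp: memsimps)

lemma ni1: "reachable E M0 M \<Longrightarrow> PiC K h N \<subseteq> ctl M \<Longrightarrow> PtC K h N \<inter> ctl M = {}"
  using ni unfolding non_interfering_def by blast
lemma ni2: "reachable E M0 M \<Longrightarrow> N_active K h N M \<Longrightarrow> is_Kevent K h N e \<Longrightarrow> concession e M
   \<Longrightarrow> \<not> touches e (PiC K h N \<union> PtC K h N)"
  using ni unfolding non_interfering_def by blast

lemma KE_preh_PiC: "KE preh = PiC K h N"
  by (rule set_eqI, rule Nc_split) (use prepost IniTer KE_Nc[of preh] in \<open>auto simp: memsimps PiC_mem\<close>)
lemma NE_Ini_PiC: "NE (Ini N) = PiC K h N"
  by (rule set_eqI, rule Nc_split) (use IniTer NE_Nc in \<open>auto simp: memsimps PiC_mem\<close>)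
lemma NE_Ter_PtC: "NE (Ter N) = PtC K h N"
  by (rule set_eqI, rule Nc_split) (use IniTer NE_Nc in \<open>auto simp: memsimps PtC_mem\<close>)
lemma KE_posth_PtC: "KE posth = PtC K h N"
  by (rule set_eqI, rule Nc_split) (use prepost IniTer KE_Nc[of posth] in \<open>auto simp: memsimps PtC_mem\<close>)

lemma KN_start:
  assumes D: "D \<subseteq> preh \<union> posth" and CM: "CN K h N M = KE D" and e0: "e0 \<in> Ev N"
    and con: "concession (Nev_of K h N e0) M" and r: "reachable E M0 M"
  shows "CN K h N M = NE (Ini N)"
proof -
  have sub: "NE (ctl (pre e0)) \<subseteq> ctl M" using concession_ctl(1)[OF con] by simp
  obtain c where c: "c \<in> ctl (pre e0)" using Nev_pre_ne[OF e0] by auto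
  have cT: "c \<notin> Ter N" using c Nev_pre_Ter[OF e0] by auto
  have cI: "c \<in> Ini N"
  proof (rule ccontr)
    assume "c \<notin> Ini N"
    then have "Tag2 c \<in> NE (ctl (pre e0))" using c cT by (simp add: memsimps)
    then have "Tag2 c \<in> CN K h N M" using sub cT \<open>c \<notin> Ini N\<close> by (auto simp: memsimps)
    then show False using CM by simp
  qed
  have pD: "preh \<subseteq> D"
  proof
    fix a assume a: "a \<in> preh"
    have "Glue (Tag1 a) (Tag2 c) \<in> NE (ctl (pre e0))" using a c cI by (simp add: memsimps)
    then have "Glue (Tag1 a) (Tag2 c) \<in> CN K h N M" using sub a cI by (auto simp: memsimps)
    then show "a \<in> D" using CM by (simp add: memsimps)
  qed
  have "PiC K h N \<subseteq> ctl M"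
  proof
    fix x assume "x \<in> PiC K h N"
    then obtain a i where x: "x = Glue (Tag1 a) (Tag2 i)" "a \<in> preh" "i \<in> Ini N" by (auto simp: PiC_mem)
    then have "x \<in> CN K h N M" using CM pD by (auto simp: memsimps)
    then show "x \<in> ctl M" by (simp add: CN_mem)
  qed
  then have pt: "PtC K h N \<inter> ctl M = {}" using ni1 r by blast
  have "D \<inter> posth = {}"
  proof (rule ccontr)
    assume "D \<inter> posth \<noteq> {}"
    then obtain x where x: "x \<in> D" "x \<in> posth" by auto
    obtain t where t: "t \<in> Ter N" using Ter_ne by auto
    have "Glue (Tag1 x) (Tag2 t) \<in> CN K h N M" using CM x t by (simp add: memsimps)
    moreover have "Glue (Tag1 x) (Tag2 t) \<in> PtC K h N" using x t by (auto simp: PtC_mem)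
    ultimately show False using pt by (auto simp: CN_mem)
  qed
  then have "D = preh" using D pD by auto
  then show ?thesis using CM KE_preh_PiC NE_Ini_PiC by simp
qed

lemma N_fire:
  assumes CM: "CN K h N M = NE C" and con: "concession (Nev_of K h N e0) M"
  shows "ctrl_fire C e0 ((C - ctl (pre e0)) \<union> ctl (post e0))"
    "CN K h N (fire (Nev_of K h N e0) M) = NE ((C - ctl (pre e0)) \<union> ctl (post e0))"
proof -
  have sub: "NE (ctl (pre e0)) \<subseteq> ctl M" using concession_ctl(1)[OF con] by simp
  have dis: "(ctl M - NE (ctl (pre e0))) \<inter> NE (ctl (post e0)) = {}" using concession_ctl(2)[OF con] by simp
  have s1: "ctl (pre e0) \<subseteq> C"
  proof
    fix c assume c: "c \<in> ctl (pre e0)"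
    obtain w where w: "Nc w" "\<And>C. w \<in> NE C \<longleftrightarrow> c \<in> C" using wit by blast
    have "w \<in> CN K h N M" using w sub c by (auto simp: CN_mem)
    then show "c \<in> C" using CM w by simp
  qed
  have s2: "(C - ctl (pre e0)) \<inter> ctl (post e0) = {}"
  proof (rule ccontr)
    assume "(C - ctl (pre e0)) \<inter> ctl (post e0) \<noteq> {}"
    then obtain c where c: "c \<in> C" "c \<notin> ctl (pre e0)" "c \<in> ctl (post e0)" by auto
    obtain w where w: "Nc w" "\<And>C. w \<in> NE C \<longleftrightarrow> c \<in> C" using wit by blast
    have "w \<in> ctl M" using CM w c by (metis CN_mem)
    then show False using dis w c by auto
  qed
  show "ctrl_fire C e0 ((C - ctl (pre e0)) \<union> ctl (post e0))"
    using s1 s2 by (simp add: ctrl_fire_def)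
  show "CN K h N (fire (Nev_of K h N e0) M) = NE ((C - ctl (pre e0)) \<union> ctl (post e0))"
  proof (rule set_eqI)
    fix x
    show "x \<in> CN K h N (fire (Nev_of K h N e0) M) \<longleftrightarrow> x \<in> NE ((C - ctl (pre e0)) \<union> ctl (post e0))"
    proof (induct x rule: Nc_split)
      case (1 a i)
      then show ?case unfolding CN_fire CM by (auto simp: memsimps)
    next
      case (2 c)
      then show ?case unfolding CN_fire CM by (auto simp: memsimps)
    next
      case (3 x)
      then show ?case unfolding CN_fire CM using NE_Nc by blast
    qed
  qed
qed

lemma N_K_fire:
  assumes "\<not> touches (Kev_of K h N e) (PiC K h N \<union> PtC K h N)"
  shows "CN K h N (fire (Kev_of K h N e) M) = CN K h N M"
proof -
  have a: "\<And>x. x \<in> KE (ctl (pre e)) \<Longrightarrow> \<not> Nc x" "\<And>x. x \<in> KE (ctl (post e)) \<Longrightarrow> \<not> Nc x"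
    using assms KE_Nc_P unfolding touches_def by fastforce+
  show ?thesis unfolding CN_fire using a by (auto simp: CN_mem)
qed

lemma N_K_step:
  assumes CM: "CN K h N M = NE C" and C: "C \<in> ctrl_reach N" "C \<noteq> Ter N"
    and r: "reachable E M0 M" and e: "e \<in> Ev K - {h}" and con: "concession (Kev_of K h N e) M"
  shows "\<not> touches (Kev_of K h N e) (PiC K h N \<union> PtC K h N)"
proof
  assume T: "touches (Kev_of K h N e) (PiC K h N \<union> PtC K h N)"
  have isK: "is_Kevent K h N (Kev_of K h N e)" using e by (simp add: is_Kevent_def)
  have na: "\<not> N_active K h N M" using ni2[OF r _ isK con] T by blast
  have CIT: "C \<subseteq> Ini N \<union> Ter N"
  proof
    fix c assume c: "c \<in> C"
    show "c \<in> Ini N \<union> Ter N"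
    proof (rule ccontr)
      assume nc: "c \<notin> Ini N \<union> Ter N"
      then have "Tag2 c \<in> CN K h N M" using CM c by (simp add: memsimps)
      moreover obtain e1 where "e1 \<in> Ev N" "c \<in> ctl (post e1)" using reach_sub[OF C(1) c] nc by auto
      ultimately have "internal_to_N N (Tag2 c)" "Tag2 c \<in> ctl M" using nc unfolding internal_to_N_def
        by (auto simp: CN_mem simp del: split_paired_Ex)
      then have "N_active K h N M" unfolding N_active_def by blast
      then show False using na by simp
    qed
  qed
  have nIC: "\<not> Ini N \<subseteq> C"
  proof
    assume IC: "Ini N \<subseteq> C"
    have "PiC K h N \<subseteq> NE C"
    proof
      fix x assume "x \<in> PiC K h N"
      then obtain a i where x: "x = Glue (Tag1 a) (Tag2 i)" "a \<in> preh" "i \<in> Ini N" by (auto simp: PiC_mem)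
      have "i \<in> C" using IC x(3) by blast
      then show "x \<in> NE C" using x by (simp add: memsimps)
    qed
    then have "PiC K h N \<subseteq> ctl M" using CM by (auto simp: CN_def)
    then show False using na by (simp add: N_active_def)
  qed
  have w: "C \<noteq> Ini N" using nIC by auto
  have nCI: "\<not> C \<subseteq> Ini N" and nCT: "\<not> C \<subseteq> Ter N" and nTC: "\<not> Ter N \<subseteq> C"
    using wf_reach[OF C(1)] w C(2) by auto
  obtain i where i: "i \<in> C" "i \<in> Ini N" using nCT CIT by auto
  obtain t where t: "t \<in> C" "t \<in> Ter N" using nCI CIT by auto
  obtain i' where i': "i' \<notin> C" "i' \<in> Ini N" using nIC by auto
  obtain t' where t': "t' \<notin> C" "t' \<in> Ter N" using nTC by auto
  have sub: "KE (ctl (pre e)) \<subseteq> ctl M" using concession_ctl(1)[OF con] by simp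
  have dis: "(ctl M - KE (ctl (pre e))) \<inter> KE (ctl (post e)) = {}" using concession_ctl(2)[OF con] by simp
  from T obtain y where y: "y \<in> KE (ctl (pre e)) \<union> KE (ctl (post e))" "y \<in> PiC K h N \<union> PtC K h N"
    unfolding touches_def by auto
  then obtain a j where aj: "y = Glue (Tag1 a) (Tag2 j)" "a \<in> preh \<and> j \<in> Ini N \<or> a \<in> posth \<and> j \<in> Ter N"
    by (auto simp: PiC_mem PtC_mem)
  have aa: "a \<in> ctl (pre e) \<or> a \<in> ctl (post e)" using y(1) aj by (auto simp: memsimps)
  show False
  proof (cases "a \<in> ctl (pre e)")
    case True
    show False
    proof (cases "a \<in> preh")
      case True
      have "Glue (Tag1 a) (Tag2 i') \<in> ctl M" using sub \<open>a \<in> ctl (pre e)\<close> True i' by (auto simp: memsimps)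
      then have "Glue (Tag1 a) (Tag2 i') \<in> CN K h N M" using True i' by (simp add: memsimps)
      then show False using CM i' IniTer by (auto simp: memsimps)
    next
      case False
      then have ap: "a \<in> posth" using aj by auto
      have "Glue (Tag1 a) (Tag2 t') \<in> ctl M" using sub \<open>a \<in> ctl (pre e)\<close> ap t' by (auto simp: memsimps)
      then have "Glue (Tag1 a) (Tag2 t') \<in> CN K h N M" using ap t' by (simp add: memsimps)
      then show False using CM t' IniTer by (auto simp: memsimps)
    qed
  next
    case False
    then have ap: "a \<in> ctl (post e)" using aa by auto
    show False
    proof (cases "a \<in> preh")
      case True
      have "Glue (Tag1 a) (Tag2 i) \<in> CN K h N M" using CM True i by (simp add: memsimps)
      then have "Glue (Tag1 a) (Tag2 i) \<in> ctl M" by (simp add: CN_mem)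
      moreover have "Glue (Tag1 a) (Tag2 i) \<notin> KE (ctl (pre e))" using False by (simp add: memsimps)
      moreover have "Glue (Tag1 a) (Tag2 i) \<in> KE (ctl (post e))" using ap True i by (simp add: memsimps)
      ultimately show False using dis by blast
    next
      case F2: False
      then have ah: "a \<in> posth" using aj by auto
      have "Glue (Tag1 a) (Tag2 t) \<in> CN K h N M" using CM ah t by (simp add: memsimps)
      then have "Glue (Tag1 a) (Tag2 t) \<in> ctl M" by (simp add: CN_mem)
      moreover have "Glue (Tag1 a) (Tag2 t) \<notin> KE (ctl (pre e))" using False by (simp add: memsimps)
      moreover have "Glue (Tag1 a) (Tag2 t) \<in> KE (ctl (post e))" using ap ah t by (simp add: memsimps)
      ultimately show False using dis by blast
    qed
  qed
qed

lemma final_not_N: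
  assumes "ctl M = KE (Ter K)" "CN K h N M = NE C" "C \<in> ctrl_reach N"
  shows "C = Ter N"
proof -
  have "C \<subseteq> Ter N"
  proof
    fix c assume c: "c \<in> C"
    show "c \<in> Ter N"
    proof (rule ccontr)
      assume nt: "c \<notin> Ter N"
      show False
      proof (cases "c \<in> Ini N")
        case True
        obtain a where a: "a \<in> preh" using preh_ne by auto
        have "Glue (Tag1 a) (Tag2 c) \<in> CN K h N M" using assms(2) a c True by (simp add: memsimps)
        then have "Glue (Tag1 a) (Tag2 c) \<in> KE (Ter K)" using assms(1) by (simp add: CN_mem)
        then show False using a preh_TerK by (auto simp: memsimps)
      next
        case False
        have "Tag2 c \<in> CN K h N M" using assms(2) c False nt by (simp add: memsimps)
        then show False using assms(1) by (simp add: CN_mem)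
      qed
    qed
  qed
  then show ?thesis using wf_reach[OF assms(3)] by blast
qed

lemma init_K: "CN K h N M0 = KE (Ini K \<inter> (preh \<union> posth))"
  unfolding CN_def by (rule set_eqI, rule Nc_split) (use KE_Nc[of "Ini K \<inter> (preh \<union> posth)"] in \<open>auto simp: memsimps subst_def\<close>)

lemma ev_cases: "e \<in> E \<Longrightarrow> (\<exists>e0 \<in> Ev K - {h}. e = Kev_of K h N e0) \<or> (\<exists>e0 \<in> Ev N. e = Nev_of K h N e0)"
  by (auto simp: subst_def)

end


context L begin

definition Kmode where "Kmode M \<longleftrightarrow> (\<exists>D. D \<subseteq> preh \<union> posth \<and> CN K h N M = KE D)"
definition Nmode where "Nmode C M \<longleftrightarrow> C \<in> ctrl_reach N \<and> C \<noteq> Ter N \<and> CN K h N M = NE C"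
definition tail1 where "tail1 M \<alpha> \<longleftrightarrow> valid_seq E M \<alpha> \<and> \<alpha> \<noteq> []
   \<and> (\<forall>M'\<in>set (markings M \<alpha>). is_Nmarking K h N M')
   \<and> (\<forall>e\<in>set \<alpha>. is_Kevent K h N e \<longrightarrow> \<not> touches e (PiC K h N \<union> PtC K h N))
   \<and> CN K h N (end_marking M \<alpha>) = PtC K h N \<and> is_Nevent K h N (last \<alpha>)"

abbreviation cc :: "(('a,'s) event list \<times> ('a,'s) event list) list \<Rightarrow> ('a,'s) event list" where
  "cc segs \<equiv> concat (map (\<lambda>(a, b). a @ b) segs)"

lemma Kmode_Kmarking: "Kmode M \<Longrightarrow> is_Kmarking K h N M"
  unfolding Kmode_def using Kmarking_of by blast

lemma main:
  "valid_seq E M \<pi> \<Longrightarrow> reachable E M0 M \<Longrightarrow> ctl (end_marking M \<pi>) = KE (Ter K) \<Longrightarrow>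
   (Kmode M \<longrightarrow> (\<exists>\<pi>0 segs. \<pi> = \<pi>0 @ cc segs \<and> form0 K h N M \<pi>0
        \<and> form_star K h N (end_marking M \<pi>0) segs))
 \<and> (\<forall>C. Nmode C M \<longrightarrow> (\<exists>\<alpha> \<beta> segs. \<pi> = \<alpha> @ \<beta> @ cc segs \<and> tail1 M \<alpha>
        \<and> form0 K h N (end_marking M \<alpha>) \<beta> \<and> form_star K h N (end_marking M (\<alpha> @ \<beta>)) segs))"
proof (induct \<pi> arbitrary: M)
  case Nil
  show ?case
  proof (intro conjI impI allI)
    assume "Kmode M"
    then show "\<exists>\<pi>0 segs. [] = \<pi>0 @ cc segs \<and> form0 K h N M \<pi>0 \<and> form_star K h N (end_marking M \<pi>0) segs"
      by (intro exI[of _ "[]"]) (simp add: form0_def Kmode_Kmarking)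
  next
    fix C assume "Nmode C M"
    then show "\<exists>\<alpha> \<beta> segs. [] = \<alpha> @ \<beta> @ cc segs \<and> tail1 M \<alpha> \<and> form0 K h N (end_marking M \<alpha>) \<beta>
        \<and> form_star K h N (end_marking M (\<alpha> @ \<beta>)) segs"
      using final_not_N[of M C] Nil(3) by (auto simp: Nmode_def)
  qed
next
  case (Cons e \<pi>)
  define M' where "M' = fire e M"
  have eE: "e \<in> E" and con: "concession e M" and v: "valid_seq E M' \<pi>"
    using Cons(2) by (auto simp: M'_def)
  have r': "reachable E M0 M'" using reach_step[OF Cons(3) eE con] by (simp add: M'_def)
  have fin: "ctl (end_marking M' \<pi>) = KE (Ter K)" using Cons(4) by (simp add: M'_def)
  note IH = Cons(1)[OF v r' fin]
  show ?case
  proof (intro conjI impI allI)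
    assume "Kmode M"
    then obtain D where D: "D \<subseteq> preh \<union> posth" "CN K h N M = KE D" by (auto simp: Kmode_def)
    from ev_cases[OF eE] show "\<exists>\<pi>0 segs. e # \<pi> = \<pi>0 @ cc segs \<and> form0 K h N M \<pi>0
        \<and> form_star K h N (end_marking M \<pi>0) segs"
    proof
      assume "\<exists>e0\<in>Ev K - {h}. e = Kev_of K h N e0"
      then obtain e0 where e0: "e0 \<in> Ev K - {h}" "e = Kev_of K h N e0" by blast
      have isK: "is_Kevent K h N e" using e0 by (simp add: is_Kevent_def)
      have "Kmode M'" unfolding Kmode_def M'_def e0(2)
        using K_fire_K[OF D, of e0] D(1) by (intro exI[of _ "(D - ctl (pre e0)) \<union> (ctl (post e0) \<inter> (preh \<union> posth))"]) auto
      then obtain \<pi>0 segs where h: "\<pi> = \<pi>0 @ cc segs" "form0 K h N M' \<pi>0"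
        "form_star K h N (end_marking M' \<pi>0) segs" using IH by blast
      show ?thesis
        apply (rule exI[of _ "e # \<pi>0"], rule exI[of _ segs])
        using h eE con isK Kmarking_of[OF D] unfolding form0_def by (auto simp: M'_def)
    next
      assume "\<exists>e0\<in>Ev N. e = Nev_of K h N e0"
      then obtain e0 where e0: "e0 \<in> Ev N" "e = Nev_of K h N e0" by blast
      have isN: "is_Nevent K h N e" using e0 by (simp add: is_Nevent_def)
      have notK: "\<not> is_Kevent K h N e" using isN disj unfolding events_disjoint_def by blast
      have CM: "CN K h N M = NE (Ini N)" using KN_start[OF D e0(1)] con e0(2) Cons(3) by simp
      define C' where "C' = (Ini N - ctl (pre e0)) \<union> ctl (post e0)"
      have cf: "ctrl_fire (Ini N) e0 C'" and CM': "CN K h N M' = NE C'"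
        using N_fire[OF CM, of e0] con e0(2) by (simp_all add: C'_def M'_def)
      have C'r: "C' \<in> ctrl_reach N" using ctrl_reach.step[OF ctrl_reach.init e0(1) cf] .
      have NmM: "is_Nmarking K h N M" using Nmarking_of[OF CM] .
      have NmM': "is_Nmarking K h N M'" using Nmarking_of[OF CM'] .
      have PiM: "CN K h N M = PiC K h N" using CM NE_Ini_PiC by simp
      show ?thesis
      proof (cases "C' = Ter N")
        case True
        have "Kmode M'" unfolding Kmode_def using CM' True NE_Ter_PtC KE_posth_PtC by auto
        then obtain \<pi>0 segs where h: "\<pi> = \<pi>0 @ cc segs" "form0 K h N M' \<pi>0"
          "form_star K h N (end_marking M' \<pi>0) segs" using IH by blast
        have f1: "form1 K h N M [e]"
          unfolding form1_def using eE con NmM NmM' notK isN PiM CM' True NE_Ter_PtC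
          by (simp add: M'_def)
        show ?thesis
          apply (rule exI[of _ "[]"], rule exI[of _ "([e], \<pi>0) # segs"])
          using h f1 Kmode_Kmarking[OF \<open>Kmode M\<close>] by (simp add: form0_def M'_def end_append)
      next
        case False
        then have "Nmode C' M'" using C'r CM' by (simp add: Nmode_def)
        then obtain \<alpha> \<beta> segs where h: "\<pi> = \<alpha> @ \<beta> @ cc segs" "tail1 M' \<alpha>"
          "form0 K h N (end_marking M' \<alpha>) \<beta>" "form_star K h N (end_marking M' (\<alpha> @ \<beta>)) segs"
          using IH by blast
        have f1: "form1 K h N M (e # \<alpha>)"
          using h(2) eE con NmM notK isN PiM unfolding form1_def tail1_def by (simp add: M'_def)
        show ?thesis
          apply (rule exI[of _ "[]"], rule exI[of _ "(e # \<alpha>, \<beta>) # segs"])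
          using h f1 Kmode_Kmarking[OF \<open>Kmode M\<close>] by (simp add: form0_def M'_def end_append)
      qed
    qed
  next
    fix C assume NC: "Nmode C M"
    then have Cr: "C \<in> ctrl_reach N" and CT: "C \<noteq> Ter N" and CM: "CN K h N M = NE C"
      by (auto simp: Nmode_def)
    have NmM: "is_Nmarking K h N M" using Nmarking_of[OF CM] .
    from ev_cases[OF eE] show "\<exists>\<alpha> \<beta> segs. e # \<pi> = \<alpha> @ \<beta> @ cc segs \<and> tail1 M \<alpha>
        \<and> form0 K h N (end_marking M \<alpha>) \<beta> \<and> form_star K h N (end_marking M (\<alpha> @ \<beta>)) segs"
    proof
      assume "\<exists>e0\<in>Ev K - {h}. e = Kev_of K h N e0"
      then obtain e0 where e0: "e0 \<in> Ev K - {h}" "e = Kev_of K h N e0" by blast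
      have nt: "\<not> touches e (PiC K h N \<union> PtC K h N)"
        using N_K_step[OF CM Cr CT Cons(3) e0(1)] con e0(2) by simp
      have "CN K h N M' = CN K h N M" using N_K_fire[of e0 M] nt e0(2) by (simp add: M'_def)
      then have "Nmode C M'" using NC by (simp add: Nmode_def)
      then obtain \<alpha> \<beta> segs where h: "\<pi> = \<alpha> @ \<beta> @ cc segs" "tail1 M' \<alpha>"
        "form0 K h N (end_marking M' \<alpha>) \<beta>" "form_star K h N (end_marking M' (\<alpha> @ \<beta>)) segs"
        using IH by blast
      show ?thesis
        apply (rule exI[of _ "e # \<alpha>"], rule exI[of _ \<beta>], rule exI[of _ segs])
        using h eE con NmM nt unfolding tail1_def by (auto simp: M'_def)
    next
      assume "\<exists>e0\<in>Ev N. e = Nev_of K h N e0"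
      then obtain e0 where e0: "e0 \<in> Ev N" "e = Nev_of K h N e0" by blast
      have isN: "is_Nevent K h N e" using e0 by (simp add: is_Nevent_def)
      have notK: "\<not> is_Kevent K h N e" using isN disj unfolding events_disjoint_def by blast
      define C' where "C' = (C - ctl (pre e0)) \<union> ctl (post e0)"
      have cf: "ctrl_fire C e0 C'" and CM': "CN K h N M' = NE C'"
        using N_fire[OF CM, of e0] con e0(2) by (simp_all add: C'_def M'_def)
      have C'r: "C' \<in> ctrl_reach N" using ctrl_reach.step[OF Cr e0(1) cf] .
      have NmM': "is_Nmarking K h N M'" using Nmarking_of[OF CM'] .
      show ?thesis
      proof (cases "C' = Ter N")
        case True
        have "Kmode M'" unfolding Kmode_def using CM' True NE_Ter_PtC KE_posth_PtC by auto
        then obtain \<pi>0 segs where h: "\<pi> = \<pi>0 @ cc segs" "form0 K h N M' \<pi>0"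
          "form_star K h N (end_marking M' \<pi>0) segs" using IH by blast
        have t1: "tail1 M [e]"
          unfolding tail1_def using eE con NmM NmM' notK isN CM' True NE_Ter_PtC
          by (simp add: M'_def)
        show ?thesis
          apply (rule exI[of _ "[e]"], rule exI[of _ \<pi>0], rule exI[of _ segs])
          using h t1 by (simp add: M'_def end_append)
      next
        case False
        then have "Nmode C' M'" using C'r CM' by (simp add: Nmode_def)
        then obtain \<alpha> \<beta> segs where h: "\<pi> = \<alpha> @ \<beta> @ cc segs" "tail1 M' \<alpha>"
          "form0 K h N (end_marking M' \<alpha>) \<beta>" "form_star K h N (end_marking M' (\<alpha> @ \<beta>)) segs"
          using IH by blast
        have t1: "tail1 M (e # \<alpha>)"
          using h(2) eE con NmM notK isN unfolding tail1_def by (simp add: M'_def)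
        show ?thesis
          apply (rule exI[of _ "e # \<alpha>"], rule exI[of _ \<beta>], rule exI[of _ segs])
          using h t1 by (simp add: M'_def)
      qed
    qed
  qed
qed

end

theorem lemmaA8:
  fixes K N :: "('a,'s) enet" and h :: "('a,'s) event" and \<sigma>0 \<sigma>' :: "'s set"
    and \<pi> :: "('a,'s) event list"
  assumes "is_context K h"
    and "wf_enet N"
    and "events_disjoint K h N"
    and "non_interfering K h N \<sigma>0"
    and "valid_seq (Ev (subst K h N)) (mk (Ini (subst K h N)) \<sigma>0) \<pi>"
    and "end_marking (mk (Ini (subst K h N)) \<sigma>0) \<pi> = mk (Ter (subst K h N)) \<sigma>'"
  shows "\<exists>\<pi>0 segs. \<pi> = \<pi>0 @ concat (map (\<lambda>(a, b). a @ b) segs)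
           \<and> form0 K h N (mk (Ini (subst K h N)) \<sigma>0) \<pi>0
           \<and> form_star K h N (end_marking (mk (Ini (subst K h N)) \<sigma>0) \<pi>0) segs"
proof -
  interpret L K h N \<sigma>0 using assms(1-4) by unfold_locales
  have km: "Kmode M0" unfolding Kmode_def using init_K by (intro exI[of _ "Ini K \<inter> (preh \<union> posth)"]) simp
  have fin: "ctl (end_marking M0 \<pi>) = KE (Ter K)" using assms(6) by (simp add: subst_def)
  show ?thesis using main[OF assms(5) reach_refl fin] km by blast
qed

end
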